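(* Let $\bm{X}\in\mathbb{R}^{n_1\times r}$, $\bm{Y}\in\mathbb{R}^{n_2\times r}$, and let $\bm{X}_\star,\bm{Y}_\star$, $\bm{M}_\star=\bm{X}_\star\bm{Y}_\star^\top$ be as in the context. If $\|\bm{Y}-\bm{Y}_\star\|\le\sigma_1(\bm{Y}_\star)/4$, then \[ \|(\bm{X}\bm{Y}^\top-\bm{M}_\star)\bm{Y}\|_{\mathrm{F}}\le\frac32\sigma_1(\bm{Y}_\star)\Big(\|(\bm{X}-\bm{X}_\star)\bm{Y}^\top\|_{\mathrm{F}}+\|\bm{X}(\bm{Y}-\bm{Y}_\star)^\top\|_{\mathrm{F}}+\|\bm{X}-\bm{X}_\star\|_{\mathrm{F}}\|\bm{Y}-\bm{Y}_\star\|_{\mathrm{F}}\Big). \] Similarly, if $\|\bm{X}-\bm{X}_\star\|\le\sigma_1(\bm{X}_\star)/4$, then \[ \|(\bm{X}\bm{Y}^\top-\bm{M}_\star)^\top\bm{X}\|_{\mathrm{F}}\le\frac32\sigma_1(\bm{X}_\star)\Big(\|(\bm{X}-\bm{X}_\star)\bm{Y}^\top\|_{\mathrm{F}}+\|\bm{X}(\bm{Y}-\bm{Y}_\star)^\top\|_{\mathrm{F}}+\|\bm{X}-\bm{X}_\star\|_{\mathrm{F}}\|\bm{Y}-\bm{Y}_\star\|_{\mathrm{F}}\Big). \]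
   Context: $\bm{M}_\star\in\mathbb{R}^{n_1\times n_2}$ has rank $r$ and compact SVD $\bm{M}_\star=\bm{U}_\star\bm{\Sigma}_\star\bm{V}_\star^\top$; $\bm{X}_\star=\bm{U}_\star\bm{\Sigma}_\star^{1/2}$, $\bm{Y}_\star=\bm{V}_\star\bm{\Sigma}_\star^{1/2}$, so $\bm{M}_\star=\bm{X}_\star\bm{Y}_\star^\top$. $\sigma_1(\cdot)$ is the largest singular value and $\|\cdot\|$ the spectral norm. *)

theory Defs
  imports "HOL-Analysis.Analysis"
begin

text \<open>Spectral norm (largest singular value) of a real matrix: operator norm w.r.t. Euclidean norms.\<close>
definition spec_norm :: "real^'n^'m \<Rightarrow> real" where
  "spec_norm A = onorm (\<lambda>x. A *v x)"

definition frob_norm :: "real^'n^'m \<Rightarrow> real" where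
  "frob_norm A = sqrt (\<Sum>i\<in>UNIV. \<Sum>j\<in>UNIV. (A $ i $ j)^2)"

definition diag_mat :: "real^'r \<Rightarrow> real^'r^'r" where
  "diag_mat s = (\<chi> i j. if i = j then s $ i else 0)"

end

theory Submission
  imports Defs
begin


lemma frob_eq_norm: "frob_norm (A::real^'n^'m) = norm A"
  unfolding frob_norm_def norm_vec_def L2_set_def
  by (simp add: sum_nonneg)

lemma frob_transpose: "frob_norm (transpose (A::real^'n^'m)) = frob_norm A"
proof -
  have "frob_norm (transpose A) = sqrt (\<Sum>i\<in>UNIV. \<Sum>j\<in>UNIV. (A $ j $ i)^2)"
    by (simp add: frob_norm_def transpose_def)
  also have "\<dots> = frob_norm A"
    unfolding frob_norm_def by (subst sum.swap) (rule refl)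
  finally show ?thesis .
qed

lemma spec_nonneg: "0 \<le> spec_norm (A::real^'n^'m)"
  unfolding spec_norm_def by (rule onorm_pos_le) simp

lemma spec_bound: "norm ((A::real^'n^'m) *v x) \<le> spec_norm A * norm x"
  unfolding spec_norm_def by (rule onorm) simp

lemma spec_transpose_bound:
  fixes B :: "real^'n^'m"
  shows "norm (transpose B *v v) \<le> spec_norm B * norm v"
proof -
  define w where "w = transpose B *v v"
  have "norm w ^ 2 = inner w w" by (simp add: power2_norm_eq_inner)
  also have "\<dots> = inner (v v* B) w" by (simp add: w_def)
  also have "\<dots> = inner v (B *v w)" by (rule dot_lmul_matrix)
  also have "\<dots> \<le> norm v * norm (B *v w)" by (rule norm_cauchy_schwarz)
  also have "\<dots> \<le> norm v * (spec_norm B * norm w)"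
    by (rule mult_left_mono[OF spec_bound]) simp
  finally have h: "norm w * norm w \<le> (spec_norm B * norm v) * norm w"
    by (simp add: power2_eq_square algebra_simps)
  show ?thesis
  proof (cases "norm w = 0")
    case True then show ?thesis using spec_nonneg[of B]
      by (simp add: w_def)
  next
    case False then have "norm w > 0" by simp
    with h have "norm w \<le> spec_norm B * norm v" by simp
    then show ?thesis by (simp add: w_def)
  qed
qed

lemma row_mult: "((A::real^'k^'m) ** (B::real^'n^'k)) $ i = transpose B *v (A $ i)"
  by (simp add: vec_eq_iff matrix_matrix_mult_def matrix_vector_mult_def transpose_def mult.commute)

lemma frob_mult_spec:
  fixes A :: "real^'k^'m" and B :: "real^'n^'k"
  shows "frob_norm (A ** B) \<le> frob_norm A * spec_norm B"
proof -
  have "norm (A ** B) = L2_set (\<lambda>i. norm ((A ** B) $ i)) UNIV" by (simp add: norm_vec_def)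
  also have "\<dots> \<le> L2_set (\<lambda>i. spec_norm B * norm (A $ i)) UNIV"
    by (rule L2_set_mono) (auto simp: row_mult intro: spec_transpose_bound[of B, simplified])
  also have "\<dots> = spec_norm B * norm A"
    by (simp add: norm_vec_def L2_set_right_distrib spec_nonneg)
  finally show ?thesis by (simp add: frob_eq_norm mult.commute)
qed

lemma spec_le_frob: "spec_norm (B::real^'n^'m) \<le> frob_norm B"
  unfolding spec_norm_def
proof (rule onorm_le)
  fix x :: "real^'n"
  have "norm (B *v x) = L2_set (\<lambda>i. norm ((B *v x) $ i)) UNIV" by (simp add: norm_vec_def)
  also have "\<dots> \<le> L2_set (\<lambda>i. norm x * norm (B $ i)) UNIV"
  proof (rule L2_set_mono)
    fix i
    have "(B *v x) $ i = inner (B $ i) x"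
      by (simp add: matrix_vector_mult_def inner_vec_def)
    then show "norm ((B *v x) $ i) \<le> norm x * norm (B $ i)"
      using Cauchy_Schwarz_ineq2[of "B $ i" x] by (simp add: mult.commute)
  qed simp
  also have "\<dots> = norm x * norm B"
    by (simp add: norm_vec_def L2_set_right_distrib)
  finally show "norm (B *v x) \<le> frob_norm B * norm x" by (simp add: frob_eq_norm mult.commute)
qed

lemma spec_triangle: "spec_norm ((A::real^'n^'m) + B) \<le> spec_norm A + spec_norm B"
  unfolding spec_norm_def
proof -
  have e: "(\<lambda>x. (A+B) *v x) = (\<lambda>x. A *v x + B *v x)" by (simp add: matrix_vector_mult_add_rdistrib)
  show "onorm ((*v) (A + B)) \<le> onorm ((*v) A) + onorm ((*v) B)"
    using onorm_triangle[of "\<lambda>x. A *v x" "\<lambda>x. B *v x"] e by simp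
qed


lemma mm_diff_l: "(A::real^'k^'m) ** ((B::real^'n^'k) - C) = A ** B - A ** C"
  by (simp add: vec_eq_iff matrix_matrix_mult_def sum_subtractf right_diff_distrib)

lemma mm_diff_r: "((A::real^'k^'m) - B) ** (C::real^'n^'k) = A ** C - B ** C"
  by (simp add: vec_eq_iff matrix_matrix_mult_def sum_subtractf left_diff_distrib)

lemma tr_diff: "transpose ((A::real^'k^'m) - B) = transpose A - transpose B"
  by (simp add: vec_eq_iff transpose_def)

lemma key_identity:
  fixes X Xs :: "real^'r^'n1" and Y Ys :: "real^'r^'n2"
  shows "X ** transpose Y - Xs ** transpose Ys =
    (X - Xs) ** transpose Y + X ** transpose (Y - Ys) - (X - Xs) ** transpose (Y - Ys)"
  unfolding mm_diff_l mm_diff_r tr_diff by (simp add: algebra_simps)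

lemma diag_sq_gen: "diag_mat t ** transpose (diag_mat t) = diag_mat (\<chi> i. (t $ i)^2)"
proof -
  have *: "(\<Sum>k\<in>UNIV. (if i = k then t $ i else 0) * (if j = k then t $ j else 0))
     = (if i = j then (t $ i)^2 else 0)" for i j
  proof -
    have "(\<Sum>k\<in>UNIV. (if i = k then t $ i else 0) * (if j = k then t $ j else 0))
       = (\<Sum>k\<in>UNIV. if k = i then (if j = i then t $ i * t $ j else 0) else 0)"
      by (rule sum.cong) auto
    also have "\<dots> = (if i = j then (t $ i)^2 else 0)"
      by (simp add: power2_eq_square)
    finally show ?thesis .
  qed
  show ?thesis
    unfolding vec_eq_iff matrix_matrix_mult_def transpose_def diag_mat_def
    using * by simp
qed

lemma diag_sq:
  assumes "\<forall>i. s $ i > 0"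
  shows "diag_mat (\<chi> i. sqrt (s $ i)) ** transpose (diag_mat (\<chi> i. sqrt (s $ i))) = diag_mat s"
proof -
  have "(\<chi> i. ((\<chi> i. sqrt (s $ i)) $ i)^2) = s"
    using assms by (simp add: vec_eq_iff less_imp_le)
  then show ?thesis by (simp only: diag_sq_gen)
qed

theorem lemma4:
  fixes M_star :: "real^'n2^'n1"
    and U_star :: "real^'r^'n1" and V_star :: "real^'r^'n2" and s :: "real^'r"
    and X_star X :: "real^'r^'n1" and Y_star Y :: "real^'r^'n2"
  assumes rank_M: "rank M_star = CARD('r)"
    and U_orth: "transpose U_star ** U_star = mat 1"
    and V_orth: "transpose V_star ** V_star = mat 1"
    and s_pos: "\<forall>i. s $ i > 0"
    and svd: "M_star = U_star ** diag_mat s ** transpose V_star"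
    and X_star_def: "X_star = U_star ** diag_mat (\<chi> i. sqrt (s $ i))"
    and Y_star_def: "Y_star = V_star ** diag_mat (\<chi> i. sqrt (s $ i))"
  shows "(spec_norm (Y - Y_star) \<le> spec_norm Y_star / 4 \<longrightarrow>
           frob_norm ((X ** transpose Y - M_star) ** Y)
             \<le> 3/2 * spec_norm Y_star *
                (frob_norm ((X - X_star) ** transpose Y) + frob_norm (X ** transpose (Y - Y_star))
                 + frob_norm (X - X_star) * frob_norm (Y - Y_star)))
       \<and> (spec_norm (X - X_star) \<le> spec_norm X_star / 4 \<longrightarrow>
           frob_norm (transpose (X ** transpose Y - M_star) ** X)
             \<le> 3/2 * spec_norm X_star *
                (frob_norm ((X - X_star) ** transpose Y) + frob_norm (X ** transpose (Y - Y_star))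
                 + frob_norm (X - X_star) * frob_norm (Y - Y_star)))"
proof -
  define D where "D = diag_mat (\<chi> i. sqrt (s $ i))"
  have "X_star ** transpose Y_star = U_star ** (D ** transpose D) ** transpose V_star"
    unfolding X_star_def Y_star_def D_def[symmetric]
    by (simp add: matrix_transpose_mul matrix_mul_assoc)
  then have Mst: "M_star = X_star ** transpose Y_star"
    using diag_sq[OF s_pos, folded D_def] svd by simp
  define S where "S = frob_norm ((X - X_star) ** transpose Y) + frob_norm (X ** transpose (Y - Y_star))
                 + frob_norm (X - X_star) * frob_norm (Y - Y_star)"
  define E where "E = X ** transpose Y - M_star"
  have E_eq: "E = (X - X_star) ** transpose Y + X ** transpose (Y - Y_star)
      - (X - X_star) ** transpose (Y - Y_star)"
    unfolding E_def Mst by (rule key_identity)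
  have "frob_norm ((X - X_star) ** transpose (Y - Y_star))
      \<le> frob_norm (X - X_star) * spec_norm (transpose (Y - Y_star))"
    by (rule frob_mult_spec)
  also have "\<dots> \<le> frob_norm (X - X_star) * frob_norm (Y - Y_star)"
    using spec_le_frob[of "transpose (Y - Y_star)"] frob_transpose[of "Y - Y_star"]
    by (simp add: mult_left_mono frob_eq_norm)
  finally have c: "frob_norm ((X - X_star) ** transpose (Y - Y_star))
      \<le> frob_norm (X - X_star) * frob_norm (Y - Y_star)" .
  have ES: "frob_norm E \<le> S"
    unfolding E_eq S_def frob_eq_norm
    using c norm_triangle_ineq4[of "(X - X_star) ** transpose Y + X ** transpose (Y - Y_star)"
        "(X - X_star) ** transpose (Y - Y_star)"]
      norm_triangle_ineq[of "(X - X_star) ** transpose Y" "X ** transpose (Y - Y_star)"]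
    unfolding frob_eq_norm by linarith
  have S0: "0 \<le> S" using ES frob_eq_norm[of E] by (metis norm_ge_zero order_trans)
  show ?thesis
  proof (intro conjI impI)
    assume h: "spec_norm (Y - Y_star) \<le> spec_norm Y_star / 4"
    have "spec_norm Y \<le> spec_norm Y_star + spec_norm (Y - Y_star)"
      using spec_triangle[of Y_star "Y - Y_star"] by simp
    also have "\<dots> \<le> 3/2 * spec_norm Y_star" using h spec_nonneg[of Y_star] by simp
    finally have sY: "spec_norm Y \<le> 3/2 * spec_norm Y_star" .
    have "frob_norm (E ** Y) \<le> frob_norm E * spec_norm Y" by (rule frob_mult_spec)
    also have "\<dots> \<le> S * (3/2 * spec_norm Y_star)"
      using ES sY spec_nonneg[of Y] S0 by (intro mult_mono) (auto simp: frob_eq_norm)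
    finally show "frob_norm ((X ** transpose Y - M_star) ** Y) \<le> 3/2 * spec_norm Y_star *
                (frob_norm ((X - X_star) ** transpose Y) + frob_norm (X ** transpose (Y - Y_star))
                 + frob_norm (X - X_star) * frob_norm (Y - Y_star))"
      unfolding E_def S_def by (simp add: mult.commute)
  next
    assume h: "spec_norm (X - X_star) \<le> spec_norm X_star / 4"
    have "spec_norm X \<le> spec_norm X_star + spec_norm (X - X_star)"
      using spec_triangle[of X_star "X - X_star"] by simp
    also have "\<dots> \<le> 3/2 * spec_norm X_star" using h spec_nonneg[of X_star] by simp
    finally have sX: "spec_norm X \<le> 3/2 * spec_norm X_star" .
    have "frob_norm (transpose E ** X) \<le> frob_norm (transpose E) * spec_norm X" by (rule frob_mult_spec)
    also have "\<dots> \<le> S * (3/2 * spec_norm X_star)"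
      using ES sX spec_nonneg[of X] S0 frob_transpose[of E]
      by (intro mult_mono) (auto simp: frob_eq_norm)
    finally show "frob_norm (transpose (X ** transpose Y - M_star) ** X) \<le> 3/2 * spec_norm X_star *
                (frob_norm ((X - X_star) ** transpose Y) + frob_norm (X ** transpose (Y - Y_star))
                 + frob_norm (X - X_star) * frob_norm (Y - Y_star))"
      unfolding E_def S_def by (simp add: mult.commute)
  qed
qed

end
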